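(* Let $a<b$, let $\mu$ be a Steffensen–Popoviciu measure on $[a,b]$ with barycenter $b_\mu=\frac{1}{\mu([a,b])}\int_a^b x\,d\mu(x)$, and let $f:[a,b]\to\mathbb{R}$ be a left almost convex function, with $c<d$ interior points of $[a,b]$ as in the definition of left almost convexity (so $f|_{[c,b]}$ is convex and $f\ge h$ on $[a,c]$, where $h$ is the affine function with $h(c)=f(c)$, $h(d)=f(d)$). Suppose that (i) $b_\mu\ge c$; and (ii) $\displaystyle\int_a^d\Big(\big(f(x)-f(c)\big)(d-c)-\big(f(d)-f(c)\big)(x-c)\Big)\,d\mu(x)\ge0.$ Then \[ f(b_\mu)\le\frac{1}{\mu([a,b])}\int_a^b f(x)\,d\mu(x). \]
   Context: A Steffensen–Popoviciu measure on a compact interval $[a,b]$ is a real (signed, finite) Borel measure $\mu$ on $[a,b]$ with $\mu([a,b])>0$ such that $\int_{[a,b]} g(x)\,d\mu(x)\ge0$ for every continuous convex function $g:[a,b]\to[0,\infty)$. Its barycenter is $b_\mu=\frac{1}{\mu([a,b])}\int_a^b x\,d\mu(x)$. A real-valued function $f$ defined on an interval $I$ is called left almost convex if it is integrable and there is a pair of interior points $c<d$ of $I$ such that: (i) $f|_{[c,\infty)\cap I}$ is convex; and (ii) $f\ge h$ on $(-\infty,c]\cap I$, where $h$ is the affine function joining the points $(c,f(c))$ and $(d,f(d))$. Here "integrable" is understood as integrable with respect to the total variation $|\mu|$ of the measure under consideration, so that all integrals in the statement exist. *)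

theory Defs
  imports "HOL-Analysis.Analysis"
begin

text \<open>A finite signed Borel measure on [a,b] is represented by its Jordan decomposition
  mu = P - N: two finite Borel measures on the reals, both concentrated on [a,b],
  mutually singular. Then the total variation is |mu| = P + N.\<close>

definition signed_jordan :: "real \<Rightarrow> real \<Rightarrow> real measure \<Rightarrow> real measure \<Rightarrow> bool" where
  "signed_jordan a b P N \<longleftrightarrow>
     finite_measure P \<and> finite_measure N \<and>
     sets P = sets borel \<and> sets N = sets borel \<and>
     emeasure P (UNIV - {a..b}) = 0 \<and> emeasure N (UNIV - {a..b}) = 0 \<and>
     (\<exists>A \<in> sets borel. emeasure P A = 0 \<and> emeasure N (UNIV - A) = 0)"

definition sint :: "real measure \<Rightarrow> real measure \<Rightarrow> real set \<Rightarrow> (real \<Rightarrow> real) \<Rightarrow> real" where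
  "sint P N S g = (LINT x:S|P. g x) - (LINT x:S|N. g x)"

definition smass :: "real \<Rightarrow> real \<Rightarrow> real measure \<Rightarrow> real measure \<Rightarrow> real" where
  "smass a b P N = measure P {a..b} - measure N {a..b}"

definition SP_measure :: "real \<Rightarrow> real \<Rightarrow> real measure \<Rightarrow> real measure \<Rightarrow> bool" where
  "SP_measure a b P N \<longleftrightarrow> signed_jordan a b P N \<and> smass a b P N > 0 \<and>
     (\<forall>g. continuous_on {a..b} g \<and> convex_on {a..b} g \<and> (\<forall>x\<in>{a..b}. g x \<ge> 0)
          \<longrightarrow> sint P N {a..b} g \<ge> 0)"

definition barycenter :: "real \<Rightarrow> real \<Rightarrow> real measure \<Rightarrow> real measure \<Rightarrow> real" where
  "barycenter a b P N = sint P N {a..b} (\<lambda>x. x) / smass a b P N"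

definition left_almost_convex ::
  "real \<Rightarrow> real \<Rightarrow> real measure \<Rightarrow> real measure \<Rightarrow> (real \<Rightarrow> real) \<Rightarrow> real \<Rightarrow> real \<Rightarrow> bool" where
  "left_almost_convex a b P N f c d \<longleftrightarrow>
     set_integrable P {a..b} f \<and> set_integrable N {a..b} f \<and>
     a < c \<and> c < d \<and> d < b \<and>
     convex_on {c..b} f \<and>
     (\<forall>x\<in>{a..c}. f x \<ge> f c + (f d - f c) / (d - c) * (x - c))"

end

theory Submission
  imports Defs
begin


lemma jordan_facts:
  assumes "signed_jordan a b P N"
  shows "finite_measure P" "finite_measure N" "sets P = sets borel" "sets N = sets borel"
  using assms unfolding signed_jordan_def by auto

lemma cont_int:
  fixes g :: "real \<Rightarrow> real"
  assumes Q: "finite_measure Q" "sets Q = sets borel" and g: "continuous_on {a..b} g"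
  shows "set_integrable Q {a..b} g"
proof -
  have "compact (g ` {a..b})" by (rule compact_continuous_image[OF g compact_Icc])
  then obtain B where B: "\<forall>y\<in>g ` {a..b}. norm y \<le> B"
    using compact_imp_bounded bounded_iff by metis
  have "set_integrable Q {a..b} (\<lambda>_. B)"
    unfolding set_integrable_def
    by (rule integrable_mult_indicator) (auto simp: Q finite_measure.integrable_const)
  moreover have "set_borel_measurable Q {a..b} g"
    using set_measurable_continuous_on[OF _ g] Q(2) unfolding set_borel_measurable_def
    using measurable_cong_sets by (metis borel_closed closed_atLeastAtMost sets_lborel)
  ultimately show ?thesis
    apply (rule set_integrable_bound)
    using B by (intro AE_I2 impI) (force intro: order_trans[OF _ abs_ge_self])
qed

lemma half_int:
  fixes g G :: "real \<Rightarrow> real"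
  assumes Q: "finite_measure Q" "sets Q = sets borel" and ab: "a \<le> b"
    and g: "continuous_on {a..<b} g" and G: "set_integrable Q {a..b} G"
    and bd: "\<forall>x\<in>{a..b}. \<bar>g x\<bar> \<le> \<bar>G x\<bar>"
  shows "set_integrable Q {a..b} g"
proof -
  have e: "(\<lambda>x. indicator {a..b} x *\<^sub>R g x) = (\<lambda>x. indicator {a..<b} x *\<^sub>R g x + indicator {b} x * g b)"
    using ab by (auto simp: indicator_def fun_eq_iff)
  have m1: "(\<lambda>x. indicator {a..<b} x *\<^sub>R g x) \<in> borel_measurable borel"
    by (rule borel_measurable_continuous_on_indicator[OF _ g]) auto
  have m2: "(\<lambda>x. indicator {b} x * g b) \<in> borel_measurable (borel::real measure)"
    by measurable
  have "(\<lambda>x. indicator {a..b} x *\<^sub>R g x) \<in> borel_measurable borel"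
    unfolding e using m1 m2 by measurable
  then have "set_borel_measurable Q {a..b} g"
    unfolding set_borel_measurable_def using Q(2) measurable_cong_sets by blast
  then show ?thesis
    by (rule set_integrable_bound[OF G]) (use bd in auto)
qed



lemma convex_max0:
  assumes "convex_on S g"
  shows "convex_on S (\<lambda>x. max (g x) 0)"
  unfolding convex_on_def
proof (intro conjI ballI allI impI)
  show "convex S" using assms convex_on_imp_convex by blast
  fix x y and u v :: real assume xy: "x \<in> S" "y \<in> S" and uv: "0 \<le> u" "0 \<le> v" "u + v = 1"
  have "g (u *\<^sub>R x + v *\<^sub>R y) \<le> u * g x + v * g y"
    using assms xy uv unfolding convex_on_def by blast
  also have "\<dots> \<le> u * max (g x) 0 + v * max (g y) 0"
    using uv by (intro add_mono mult_left_mono) auto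
  finally show "max (g (u *\<^sub>R x + v *\<^sub>R y)) 0 \<le> u * max (g x) 0 + v * max (g y) 0"
    using uv by (simp add: add_nonneg_nonneg)
qed

lemma three_chord:
  fixes f :: "real \<Rightarrow> real"
  assumes "convex_on I f" "x \<in> I" "y \<in> I" "x < t" "t < y"
  shows "(f t - f x) * (y - t) \<le> (f y - f t) * (t - x)"
proof -
  have "(f x - f t) / (x - t) \<le> (f t - f y) / (t - y)"
    using convex_on_slope_le[OF assms] by linarith
  then have "(f t - f x) / (t - x) \<le> (f y - f t) / (y - t)"
    by (smt (verit) minus_divide_divide)
  then show ?thesis using assms by (simp add: field_simps)
qed

lemma glue_convex:
  fixes f1 f2 :: "real \<Rightarrow> real"
  assumes at: "a \<le> t" "t \<le> b"
    and c1: "convex_on {a..t} f1" and c2: "convex_on {t..b} f2"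
    and eq: "f1 t = f2 t"
    and s1: "\<And>x. x \<in> {a..t} \<Longrightarrow> f1 x \<ge> f1 t + s * (x - t)"
    and s2: "\<And>x. x \<in> {t..b} \<Longrightarrow> f2 x \<ge> f2 t + s * (x - t)"
  shows "convex_on {a..b} (\<lambda>x. if x \<le> t then f1 x else f2 x)"
proof (rule convex_on_linorderI)
  show "convex {a..b}" by simp
  define G where "G = (\<lambda>x. if x \<le> t then f1 x else f2 x)"
  have G1: "\<And>x. x \<le> t \<Longrightarrow> G x = f1 x" and G2: "\<And>x. t \<le> x \<Longrightarrow> G x = f2 x"
    using eq by (auto simp: G_def)
  fix u x y :: real assume u: "0 < u" "u < 1" and xy: "x \<in> {a..b}" "y \<in> {a..b}" "x < y"
  define z where "z = (1 - u) * x + u * y"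
  have zx: "z - x = u * (y - x)" and yz: "y - z = (1 - u) * (y - x)" by (simp_all add: z_def algebra_simps)
  have p1: "0 < u * (y - x)" using u xy by simp
  have p2: "0 < (1 - u) * (y - x)" using u xy by simp
  have xz1: "x < z" using p1 zx by linarith
  have xz2: "z < y" using p2 yz by linarith
  note xz = xz1 xz2
  have "G z \<le> (1 - u) * G x + u * G y"
  proof (cases "y \<le> t")
    case True
    have "f1 z \<le> (1 - u) * f1 x + u * f1 y"
      using convex_onD[OF c1, of u x y] xy u True by (auto simp: z_def)
    then show ?thesis using True xz by (simp add: G1)
  next
    case yt: False
    show ?thesis
    proof (cases "t \<le> x")
      case True
      have "f2 z \<le> (1 - u) * f2 x + u * f2 y"
        using convex_onD[OF c2, of u x y] xy u True by (auto simp: z_def)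
      then show ?thesis using True xz by (simp add: G2)
    next
      case tx: False
      have s1x: "f1 x \<ge> f1 t + s * (x - t)" using s1 xy tx by auto
      have s2y: "f2 y \<ge> f2 t + s * (y - t)" using s2 xy yt by auto
      show ?thesis
      proof (cases "z \<le> t")
        case True
        define \<sigma> where "\<sigma> = (f1 t - f1 x) / (t - x)"
        have sig: "\<sigma> * (t - x) = f1 t - f1 x" using tx by (simp add: \<sigma>_def)
        have "\<sigma> \<le> s"
        proof -
          have "f1 t - f1 x \<le> s * (t - x)" using s1x by (simp add: algebra_simps)
          then show ?thesis using tx by (simp add: \<sigma>_def divide_le_eq)
        qed
        have cz: "f1 z \<le> \<sigma> * (z - x) + f1 x"
          using convex_onD_Icc'[OF convex_on_subset[OF c1], of x t z] xy tx True xz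
          by (auto simp: \<sigma>_def)
        have "\<sigma> * (y - t) \<le> s * (y - t)" using \<open>\<sigma> \<le> s\<close> yt by (intro mult_right_mono) auto
        then have k: "\<sigma> * (y - x) \<le> f2 y - f1 x" using sig s2y eq by (simp add: algebra_simps)
        have "\<sigma> * (z - x) = u * (\<sigma> * (y - x))" using zx by simp
        also have "\<dots> \<le> u * (f2 y - f1 x)" using k u by (intro mult_left_mono) auto
        finally have "f1 z \<le> (1 - u) * f1 x + u * f2 y" using cz by (simp add: algebra_simps)
        then show ?thesis using True tx yt by (simp add: G1 G2)
      next
        case False
        define \<tau> where "\<tau> = (f2 y - f2 t) / (y - t)"
        have tau: "\<tau> * (y - t) = f2 y - f2 t" using yt by (simp add: \<tau>_def)
        have "s \<le> \<tau>"
        proof -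
          have "s * (y - t) \<le> f2 y - f2 t" using s2y by (simp add: algebra_simps)
          then show ?thesis using yt by (simp add: \<tau>_def le_divide_eq)
        qed
        have cz0: "f2 z \<le> (f2 t - f2 y) / (y - t) * (y - z) + f2 y"
          using convex_onD_Icc''[OF convex_on_subset[OF c2], of t y z] xy yt False xz
          by auto
        have "(f2 t - f2 y) / (y - t) = - \<tau>" unfolding \<tau>_def by (simp add: divide_simps)
        then have cz: "f2 z \<le> f2 y - \<tau> * (y - z)" using cz0 by simp
        have "s * (t - x) \<le> \<tau> * (t - x)" using \<open>s \<le> \<tau>\<close> tx by (intro mult_right_mono) auto
        then have k: "f2 y - \<tau> * (y - x) \<le> f1 x" using tau s1x eq by (simp add: algebra_simps)
        have "(1 - u) * (f2 y - \<tau> * (y - x)) \<le> (1 - u) * f1 x" using k u by (intro mult_left_mono) auto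
        then have "f2 z \<le> (1 - u) * f1 x + u * f2 y" using cz yz by (simp add: algebra_simps)
        then show ?thesis using False tx yt by (simp add: G1 G2)
      qed
    qed
  qed
  then show "(\<lambda>x. if x \<le> t then f1 x else f2 x) ((1 - u) *\<^sub>R x + u *\<^sub>R y)
    \<le> (1 - u) * (\<lambda>x. if x \<le> t then f1 x else f2 x) x + u * (\<lambda>x. if x \<le> t then f1 x else f2 x) y"
    unfolding G_def z_def by (simp only: real_scaleR_def)
qed



lemma small_meas:
  fixes m e d0 :: real
  assumes Q: "finite_measure Q" "sets Q = sets borel" and e: "e > 0" and d0: "d0 > 0"
  shows "\<exists>\<delta>>0. \<delta> \<le> d0 \<and> measure Q {m - \<delta><..<m} < e"
proof -
  define A where "A = (\<lambda>n::nat. {m - inverse (real (Suc n))<..<m})"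
  have dec: "decseq A"
    unfolding decseq_def
  proof (intro allI impI)
    fix i j :: nat assume "i \<le> j"
    then have le: "inverse (real (Suc j)) \<le> inverse (real (Suc i))"
      by (intro le_imp_inverse_le) auto
    have *: "\<And>p q::real. p \<le> q \<Longrightarrow> {m - p<..<m} \<subseteq> {m - q<..<m}" by auto
    show "A j \<subseteq> A i" unfolding A_def by (rule *[OF le])
  qed
  have inter: "(\<Inter>i. A i) = {}"
  proof (rule ccontr)
    assume "(\<Inter>i. A i) \<noteq> {}"
    then obtain x where x: "\<And>i. x \<in> A i" by blast
    then have "x < m" by (auto simp: A_def)
    then obtain n where "inverse (real (Suc n)) < m - x"
      using reals_Archimedean by (metis diff_gt_0_iff_gt)
    with x[of n] show False by (auto simp: A_def)
  qed
  have "(\<lambda>n. measure Q (A n)) \<longlonglongrightarrow> measure Q (\<Inter>i. A i)"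
  proof (rule Lim_measure_decseq)
    show "range A \<subseteq> sets Q" unfolding Q(2) A_def by (intro subsetI) (auto intro: borel_open)
    show "decseq A" by (rule dec)
    show "\<And>i. emeasure Q (A i) \<noteq> \<infinity>" using finite_measure.emeasure_finite[OF Q(1)] by (simp add: infinity_ennreal_def)
  qed
  then have "(\<lambda>n. measure Q (A n)) \<longlonglongrightarrow> 0" by (simp add: inter)
  then have ev1: "eventually (\<lambda>n. measure Q (A n) < e) sequentially"
    by (rule order_tendstoD(2)) (rule e)
  have ev2: "eventually (\<lambda>n. inverse (real (Suc n)) < d0) sequentially"
    by (rule order_tendstoD(2)[OF LIMSEQ_inverse_real_of_nat]) (rule d0)
  obtain n where "measure Q (A n) < e" "inverse (real (Suc n)) < d0"
    using eventually_happens[OF eventually_conj[OF ev1 ev2]] by auto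
  then show ?thesis
    by (intro exI[of _ "inverse (real (Suc n))"]) (auto simp: A_def)
qed

lemma affine_convex: "convex S \<Longrightarrow> convex_on S (\<lambda>x::real. A + B * x)"
  unfolding convex_on_def
proof (intro conjI ballI allI impI)
  fix x y u v :: real assume "u + v = 1"
  then have "A = u * A + v * A" by (metis distrib_right mult_1)
  then show "A + B * (u *\<^sub>R x + v *\<^sub>R y) \<le> u * (A + B * x) + v * (A + B * y)"
    by (simp add: algebra_simps)
qed auto

lemma nonneg_from_eps:
  fixes x K :: real
  assumes "\<forall>e>0. x \<ge> - (K * e)" "K \<ge> 0"
  shows "x \<ge> 0"
proof (rule ccontr)
  assume "\<not> x \<ge> 0"
  then have x: "x < 0" by simp
  define e where "e = - x / (K + 1)"
  have "e > 0" using x assms(2) unfolding e_def by (intro divide_pos_pos) auto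
  then have "x \<ge> - (K * e)" using assms(1) by blast
  moreover have "- (K * e) = K * x / (K + 1)" using assms(2) by (simp add: e_def)
  moreover have "x < K * x / (K + 1)" using x assms(2) by (simp add: less_divide_eq algebra_simps)
  ultimately show False by linarith
qed



lemma SP_facts:
  assumes "SP_measure a b P N"
  shows "finite_measure P" "finite_measure N" "sets P = sets borel" "sets N = sets borel"
    "smass a b P N > 0"
    "\<And>g. continuous_on {a..b} g \<Longrightarrow> convex_on {a..b} g \<Longrightarrow> (\<forall>x\<in>{a..b}. g x \<ge> 0) \<Longrightarrow> sint P N {a..b} g \<ge> 0"
  using assms unfolding SP_measure_def signed_jordan_def by auto

lemma set_int_le_meas:
  fixes F :: "real \<Rightarrow> real"
  assumes Q: "finite_measure Q" "sets Q = sets borel"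
    and iF: "set_integrable Q S F" and S: "S \<in> sets borel" and T: "T \<in> sets borel"
    and bd: "\<And>x. x \<in> S \<Longrightarrow> 0 \<le> F x \<and> F x \<le> K * indicator T x" and K0: "K \<ge> 0"
  shows "0 \<le> (LINT x:S|Q. F x)" "(LINT x:S|Q. F x) \<le> K * measure Q T"
proof -
  show "0 \<le> (LINT x:S|Q. F x)"
    unfolding set_lebesgue_integral_def
    apply (rule Bochner_Integration.integral_nonneg)
    subgoal for x using bd[of x] by (cases "x \<in> S") (auto simp: indicator_def)
    done
  have iT: "integrable Q (\<lambda>x. K * indicator T x)"
    using Q T by (intro integrable_mult_right integrable_real_indicator)
      (auto simp: finite_measure.emeasure_finite less_top[symmetric])
  have "(LINT x:S|Q. F x) \<le> integral\<^sup>L Q (\<lambda>x. K * indicator T x)"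
    unfolding set_lebesgue_integral_def
    apply (rule integral_mono)
    using iF apply (simp add: set_integrable_def)
    using iT apply simp
    subgoal for x using bd[of x] K0 by (cases "x \<in> S"; cases "x \<in> T") (auto simp: indicator_def)
    done
  also have "\<dots> = K * measure Q T"
    using Q T by (simp add: sets_eq_imp_space_eq)
  finally show "(LINT x:S|Q. F x) \<le> K * measure Q T" .
qed

lemma ExtSP:
  fixes g :: "real \<Rightarrow> real"
  assumes SP: "SP_measure a b P N" and ab: "a < b"
    and cv: "convex_on {a..b} g" and ct: "continuous_on {a..<b} g"
    and nn: "\<forall>x\<in>{a..b}. g x \<ge> 0"
    and iP: "set_integrable P {a..b} g" and iN: "set_integrable N {a..b} g"
  shows "sint P N {a..b} g \<ge> 0"
proof -
  note F = SP_facts[OF SP]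
  define K where "K = max (g a) (g b)"
  have K0: "K \<ge> 0" using nn ab by (auto simp: K_def max_def)
  have "\<forall>e>0. sint P N {a..b} g \<ge> - (K * e)"
  proof (intro allI impI)
    fix e :: real assume e: "e > 0"
    obtain \<delta> where \<delta>: "0 < \<delta>" "\<delta> \<le> b - a" "measure P {b - \<delta><..<b} < e"
      using small_meas[OF F(1) F(3) e, of "b - a" b] ab by auto
    define t where "t = b - \<delta>"
    have t: "a \<le> t" "t < b" using \<delta> by (auto simp: t_def)
    define s where "s = (g b - g t) / (b - t)"
    define \<psi> where "\<psi> = (\<lambda>x. if x \<le> t then g x else (g t - s * t) + s * x)"
    have cvx: "convex_on {a..b} \<psi>"
      unfolding \<psi>_def
    proof (rule glue_convex[where s = s])
      show "convex_on {a..t} g" using cv t by (auto intro: convex_on_subset)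
      show "convex_on {t..b} (\<lambda>x. g t - s * t + s * x)" by (rule affine_convex) simp
      fix x assume x: "x \<in> {a..t}"
      show "g t + s * (x - t) \<le> g x"
      proof (cases "x = t")
        case False
        then have "x < t" using x by auto
        then have "(g t - g x) * (b - t) \<le> (g b - g t) * (t - x)"
          using three_chord[OF cv, of x b t] x t by auto
        then have "g t - g x \<le> s * (t - x)"
          using t by (simp add: s_def field_simps)
        then show ?thesis by (simp add: algebra_simps)
      qed simp
    qed (use t in \<open>auto simp: algebra_simps\<close>)
    have cnt: "continuous_on {a..b} \<psi>"
      unfolding \<psi>_def
    proof (rule continuous_on_cases_le)
      show "continuous_on {x \<in> {a..b}. x \<le> t} g"
        by (rule continuous_on_subset[OF ct]) (use t in auto)
    qed (auto intro!: continuous_intros)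
    have above: "g x \<le> \<psi> x" if "x \<in> {a..b}" for x
    proof (cases "x \<le> t")
      case False
      have "g x \<le> (g b - g t) / (b - t) * (x - t) + g t"
        using convex_onD_Icc'[OF convex_on_subset[OF cv], of t b x] that False t by auto
      moreover have "\<psi> x = g t + s * (x - t)" using False by (simp add: \<psi>_def algebra_simps)
      moreover have "(g b - g t) / (b - t) * (x - t) = s * (x - t)" by (simp add: s_def)
      ultimately show ?thesis by linarith
    qed (simp add: \<psi>_def)
    have gtK: "g t \<le> K" using convex_on_le_max[OF cv, of t] t by (simp add: K_def)
    have below: "\<psi> x \<le> K" if "x \<in> {a..b}" "t < x" for x
    proof (cases "g t \<le> g b")
      case True
      then have "s \<ge> 0" using t by (simp add: s_def)
      then have "s * (x - t) \<le> s * (b - t)" using that by (intro mult_left_mono) auto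
      also have "s * (b - t) = g b - g t" using t by (simp add: s_def)
      finally show ?thesis using that by (simp add: \<psi>_def K_def algebra_simps)
    next
      case False
      then have "s \<le> 0" using t by (simp add: s_def divide_le_0_iff)
      then have "s * (x - t) \<le> 0" using that by (simp add: mult_le_0_iff)
      then show ?thesis using that gtK by (simp add: \<psi>_def algebra_simps)
    qed
    have bd: "0 \<le> \<psi> x - g x \<and> \<psi> x - g x \<le> K * indicator {t<..<b} x" if "x \<in> {a..b}" for x
    proof -
      have "x \<le> t \<or> x = b \<or> x \<in> {t<..<b}" using that by auto
      moreover have "\<psi> b = g b"
      proof -
        have "\<psi> b = g t + s * (b - t)" using t by (simp add: \<psi>_def algebra_simps)
        moreover have "s * (b - t) = g b - g t" using t by (simp add: s_def)
        ultimately show ?thesis by simp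
      qed
      moreover have "x \<in> {t<..<b} \<Longrightarrow> \<psi> x - g x \<le> K"
      proof -
        assume "x \<in> {t<..<b}"
        then have "\<psi> x \<le> K" "g x \<ge> 0" using below[of x] nn that by auto
        then show ?thesis by linarith
      qed
      ultimately show ?thesis using above[OF that] by (auto simp: \<psi>_def)
    qed
    have nnpsi: "\<forall>x\<in>{a..b}. \<psi> x \<ge> 0" using above nn by (meson order_trans)
    have sp: "sint P N {a..b} \<psi> \<ge> 0" using F(6)[OF cnt cvx nnpsi] .
    have ipP: "set_integrable P {a..b} \<psi>" by (rule cont_int[OF F(1) F(3) cnt])
    have ipN: "set_integrable N {a..b} \<psi>" by (rule cont_int[OF F(2) F(4) cnt])
    have dP: "set_integrable P {a..b} (\<lambda>x. \<psi> x - g x)" using ipP iP by auto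
    have dN: "set_integrable N {a..b} (\<lambda>x. \<psi> x - g x)" using ipN iN by auto
    have IP: "(LINT x:{a..b}|P. \<psi> x - g x) \<le> K * measure P {t<..<b}"
      by (rule set_int_le_meas(2)[OF F(1) F(3) dP _ _ bd K0]) auto
    have IN: "0 \<le> (LINT x:{a..b}|N. \<psi> x - g x)"
      by (rule set_int_le_meas(1)[OF F(2) F(4) dN _ _ bd K0]) auto
    have eq: "sint P N {a..b} g = sint P N {a..b} \<psi> - ((LINT x:{a..b}|P. \<psi> x - g x) - (LINT x:{a..b}|N. \<psi> x - g x))"
      unfolding sint_def using set_integral_diff(2)[OF ipP iP] set_integral_diff(2)[OF ipN iN] by simp
    have "K * measure P {t<..<b} \<le> K * e"
      using \<delta>(3) K0 by (intro mult_left_mono) (auto simp: t_def)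
    then show "sint P N {a..b} g \<ge> - (K * e)" using eq IP IN sp by linarith
  qed
  then show ?thesis using nonneg_from_eps K0 by blast
qed



lemma sint_diff:
  assumes "set_integrable P S f" "set_integrable P S g" "set_integrable N S f" "set_integrable N S g"
  shows "sint P N S (\<lambda>x. f x - g x) = sint P N S f - sint P N S g"
  unfolding sint_def using set_integral_diff(2)[OF assms(1,2)] set_integral_diff(2)[OF assms(3,4)] by simp

lemma sint_add:
  assumes "set_integrable P S f" "set_integrable P S g" "set_integrable N S f" "set_integrable N S g"
  shows "sint P N S (\<lambda>x. f x + g x) = sint P N S f + sint P N S g"
  unfolding sint_def using set_integral_add(2)[OF assms(1,2)] set_integral_add(2)[OF assms(3,4)] by simp

lemma sint_cmul: "sint P N S (\<lambda>x. c * f x) = c * sint P N S f"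
  unfolding sint_def by (simp add: algebra_simps)

lemma sint_const:
  assumes "SP_measure a b P N"
  shows "sint P N {a..b} (\<lambda>_. c) = c * smass a b P N"
proof -
  note F = SP_facts[OF assms]
  have "(LINT x:{a..b}|P. c) = measure P {a..b} * c"
    using F(1,3) by (subst set_integral_const) (auto simp: finite_measure.emeasure_finite)
  moreover have "(LINT x:{a..b}|N. c) = measure N {a..b} * c"
    using F(2,4) by (subst set_integral_const) (auto simp: finite_measure.emeasure_finite)
  ultimately show ?thesis unfolding sint_def smass_def by (simp add: algebra_simps)
qed

lemma Jensen:
  fixes \<phi> :: "real \<Rightarrow> real"
  assumes SP: "SP_measure a b P N" and ab: "a < b"
    and cv: "convex_on {a..b} \<phi>" and ct: "continuous_on {a..<b} \<phi>"
    and iP: "set_integrable P {a..b} \<phi>" and iN: "set_integrable N {a..b} \<phi>"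
    and m: "a < m" "m \<le> b"
    and bary: "sint P N {a..b} (\<lambda>x. x - m) = 0"
  shows "\<phi> m * smass a b P N \<le> sint P N {a..b} \<phi>"
proof -
  note F = SP_facts[OF SP]
  define U where "U = max (\<phi> a) (\<phi> b)"
  define L0 where "L0 = 2 * \<phi> ((a + b) / 2) - U"
  have le_U: "\<phi> x \<le> U" if "x \<in> {a..b}" for x
    using convex_on_le_max[OF cv that] by (simp add: U_def)
  have ge_L: "\<phi> x \<ge> L0" if x: "x \<in> {a..b}" for x
  proof -
    have x': "a + b - x \<in> {a..b}" using x by auto
    have e: "(1 - 1/2) *\<^sub>R x + (1/2) *\<^sub>R (a + b - x) = (a + b) / 2" by (simp add: field_simps)
    have "\<phi> ((1 - 1/2) *\<^sub>R x + (1/2) *\<^sub>R (a + b - x)) \<le> (1 - 1/2) * \<phi> x + (1/2) * \<phi> (a + b - x)"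
      by (rule convex_onD[OF cv]) (use x x' in auto)
    then have "\<phi> ((a + b) / 2) \<le> (1 - 1/2) * \<phi> x + (1/2) * \<phi> (a + b - x)" unfolding e .
    then show ?thesis using le_U[OF x'] by (simp add: L0_def)
  qed
  define K where "K = U - L0"
  have K0: "K \<ge> 0" using le_U[of a] ge_L[of a] ab by (simp add: K_def)
  have "\<forall>e>0. sint P N {a..b} \<phi> - \<phi> m * smass a b P N \<ge> - (K * e)"
  proof (intro allI impI)
    fix e :: real assume e: "e > 0"
    obtain \<delta> where \<delta>: "0 < \<delta>" "\<delta> \<le> m - a" "measure P {m - \<delta><..<m} < e"
      using small_meas[OF F(1) F(3) e, of "m - a" m] m by auto
    define r where "r = m - \<delta>"
    have r: "a \<le> r" "r < m" using \<delta> by (auto simp: r_def)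
    define s where "s = (\<phi> m - \<phi> r) / \<delta>"
    have sd: "s * \<delta> = \<phi> m - \<phi> r" using \<delta> by (simp add: s_def)
    define \<beta> where "\<beta> = (\<lambda>x. \<phi> x - (\<phi> m + s * (x - m)))"
    define bp where "bp = (\<lambda>x. max (\<beta> x) 0)"
    define bn where "bn = (\<lambda>x. max (- \<beta> x) 0)"
    have split: "\<beta> = (\<lambda>x. bp x - bn x)" by (auto simp: bp_def bn_def fun_eq_iff max_def)
    have mr: "m - r = \<delta>" by (simp add: r_def)
    have ms: "\<phi> m - \<phi> r = s * \<delta>" using sd by simp
    have pos1: "\<beta> x \<ge> 0" if "x \<in> {a..b}" "x \<le> r" for x
    proof (cases "x = r")
      case True
      have "s * (r - m) = \<phi> r - \<phi> m" using sd by (simp add: r_def algebra_simps)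
      then show ?thesis unfolding True \<beta>_def by simp
    next
      case False
      then have "x < r" using that by auto
      then have "(\<phi> r - \<phi> x) * (m - r) \<le> (\<phi> m - \<phi> r) * (r - x)"
        using three_chord[OF cv, of x m r] that r m by auto
      then have "(\<phi> r - \<phi> x) * \<delta> \<le> (s * \<delta>) * (r - x)" unfolding mr ms .
      then have "(\<phi> r - \<phi> x) * \<delta> \<le> (s * (r - x)) * \<delta>" by (simp add: algebra_simps)
      then have "\<phi> r - \<phi> x \<le> s * (r - x)" using \<delta> by simp
      then show ?thesis using ms mr by (simp add: \<beta>_def algebra_simps)
    qed
    have pos2: "\<beta> x \<ge> 0" if "x \<in> {a..b}" "m \<le> x" for x
    proof (cases "x = m")
      case True then show ?thesis by (simp add: \<beta>_def)
    next
      case False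
      then have "m < x" using that by auto
      then have "(\<phi> m - \<phi> r) * (x - m) \<le> (\<phi> x - \<phi> m) * (m - r)"
        using three_chord[OF cv, of r x m] that r m by auto
      then have "(s * \<delta>) * (x - m) \<le> (\<phi> x - \<phi> m) * \<delta>" unfolding mr ms .
      then have "(s * (x - m)) * \<delta> \<le> (\<phi> x - \<phi> m) * \<delta>" by (simp add: algebra_simps)
      then have "s * (x - m) \<le> \<phi> x - \<phi> m" using \<delta> by simp
      then show ?thesis by (simp add: \<beta>_def algebra_simps)
    qed
    have negK: "- \<beta> x \<le> K" if "x \<in> {r<..<m}" for x
    proof -
      have xab: "x \<in> {a..b}" using that r m by auto
      have "\<phi> m + s * (x - m) \<le> U"
      proof (cases "s \<ge> 0")
        case True
        then have "s * (x - m) \<le> 0" using that by (simp add: mult_le_0_iff)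
        then show ?thesis using le_U[of m] m ab by auto
      next
        case False
        then have "s * (x - m) \<le> s * (r - m)" using that by (intro mult_left_mono_neg) auto
        also have "s * (r - m) = \<phi> r - \<phi> m" using sd by (simp add: r_def)
        finally show ?thesis using le_U[of r] r m by auto
      qed
      then show ?thesis using ge_L[OF xab] by (simp add: \<beta>_def K_def)
    qed
    have bnbd: "0 \<le> bn x \<and> bn x \<le> K * indicator {r<..<m} x" if "x \<in> {a..b}" for x
    proof (cases "x \<in> {r<..<m}")
      case True then show ?thesis using negK[OF True] K0 by (simp add: bn_def)
    next
      case False
      then have "x \<le> r \<or> m \<le> x" by auto
      then have "\<beta> x \<ge> 0" using pos1 pos2 that by blast
      then show ?thesis using False by (simp add: bn_def)
    qed
    have caff: "continuous_on {a..b} (\<lambda>x. \<phi> m + s * (x - m))" by (intro continuous_intros)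
    have iaP: "set_integrable P {a..b} (\<lambda>x. \<phi> m + s * (x - m))" by (rule cont_int[OF F(1) F(3) caff])
    have iaN: "set_integrable N {a..b} (\<lambda>x. \<phi> m + s * (x - m))" by (rule cont_int[OF F(2) F(4) caff])
    have ibP: "set_integrable P {a..b} \<beta>" unfolding \<beta>_def using iP iaP by auto
    have ibN: "set_integrable N {a..b} \<beta>" unfolding \<beta>_def using iN iaN by auto
    have cb: "continuous_on {a..<b} \<beta>" unfolding \<beta>_def by (intro continuous_intros ct)
    have cbp: "continuous_on {a..<b} bp" unfolding bp_def by (intro continuous_intros cb)
    have cbn: "continuous_on {a..<b} bn" unfolding bn_def by (intro continuous_intros cb)
    have bpb: "\<forall>x\<in>{a..b}. \<bar>bp x\<bar> \<le> \<bar>\<beta> x\<bar>" by (auto simp: bp_def)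
    have bnb: "\<forall>x\<in>{a..b}. \<bar>bn x\<bar> \<le> \<bar>\<beta> x\<bar>" by (auto simp: bn_def)
    have ipP: "set_integrable P {a..b} bp" by (rule half_int[OF F(1) F(3) _ cbp ibP bpb]) (use ab in auto)
    have ipN: "set_integrable N {a..b} bp" by (rule half_int[OF F(2) F(4) _ cbp ibN bpb]) (use ab in auto)
    have inP: "set_integrable P {a..b} bn" by (rule half_int[OF F(1) F(3) _ cbn ibP bnb]) (use ab in auto)
    have inN: "set_integrable N {a..b} bn" by (rule half_int[OF F(2) F(4) _ cbn ibN bnb]) (use ab in auto)
    have cvb: "convex_on {a..b} \<beta>"
    proof -
      have "convex_on {a..b} (\<lambda>x. \<phi> x + ((s * m - \<phi> m) + (- s) * x))"
        by (intro convex_on_add cv affine_convex) simp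
      moreover have "(\<lambda>x. \<phi> x + ((s * m - \<phi> m) + (- s) * x)) = \<beta>"
        by (auto simp: \<beta>_def fun_eq_iff algebra_simps)
      ultimately show ?thesis by simp
    qed
    have "sint P N {a..b} bp \<ge> 0"
      by (rule ExtSP[OF SP ab _ cbp _ ipP ipN]) (auto simp: bp_def intro: convex_max0[OF cvb, unfolded])
    moreover have "sint P N {a..b} bn \<le> K * e"
    proof -
      have "(LINT x:{a..b}|P. bn x) \<le> K * measure P {r<..<m}"
        by (rule set_int_le_meas(2)[OF F(1) F(3) inP _ _ bnbd K0]) auto
      also have "\<dots> \<le> K * e" using \<delta>(3) K0 by (intro mult_left_mono) (auto simp: r_def)
      finally have 1: "(LINT x:{a..b}|P. bn x) \<le> K * e" .
      have 2: "0 \<le> (LINT x:{a..b}|N. bn x)"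
        by (rule set_int_le_meas(1)[OF F(2) F(4) inN _ _ bnbd K0]) auto
      show ?thesis using 1 2 by (simp add: sint_def)
    qed
    moreover have "sint P N {a..b} \<beta> = sint P N {a..b} bp - sint P N {a..b} bn"
      unfolding split by (rule sint_diff[OF ipP inP ipN inN])
    moreover have "sint P N {a..b} \<beta> = sint P N {a..b} \<phi> - \<phi> m * smass a b P N"
    proof -
      have "sint P N {a..b} \<beta> = sint P N {a..b} \<phi> - sint P N {a..b} (\<lambda>x. \<phi> m + s * (x - m))"
        unfolding \<beta>_def by (rule sint_diff[OF iP iaP iN iaN])
      moreover have "sint P N {a..b} (\<lambda>x. \<phi> m + s * (x - m)) = \<phi> m * smass a b P N + s * sint P N {a..b} (\<lambda>x. x - m)"
      proof -
        have ci: "continuous_on {a..b} (\<lambda>x. s * (x - m))" by (intro continuous_intros)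
        have "sint P N {a..b} (\<lambda>x. \<phi> m + s * (x - m)) = sint P N {a..b} (\<lambda>_. \<phi> m) + sint P N {a..b} (\<lambda>x. s * (x - m))"
          by (rule sint_add) (auto intro!: cont_int[OF F(1) F(3)] cont_int[OF F(2) F(4)] continuous_intros)
        then show ?thesis by (simp add: sint_const[OF SP] sint_cmul)
      qed
      ultimately show ?thesis using bary by simp
    qed
    ultimately show "sint P N {a..b} \<phi> - \<phi> m * smass a b P N \<ge> - (K * e)" by linarith
  qed
  then have "sint P N {a..b} \<phi> - \<phi> m * smass a b P N \<ge> 0" using nonneg_from_eps K0 by blast
  then show ?thesis by simp
qed



lemma split_int:
  fixes F :: "real \<Rightarrow> real"
  assumes Q: "sets Q = sets borel" and iF: "set_integrable Q {a..b} F" and d: "a \<le> d" "d \<le> b"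
  shows "(LINT x:{a..b}|Q. F x) = (LINT x:{a..d}|Q. F x) + (LINT x:{d<..b}|Q. F x)"
proof -
  have U: "{a..b} = {a..d} \<union> {d<..b}" using d by auto
  have i1: "set_integrable Q {a..d} F"
    by (rule set_integrable_subset[OF iF]) (use Q d in auto)
  have i2: "set_integrable Q {d<..b} F"
    by (rule set_integrable_subset[OF iF]) (use Q d in auto)
  show ?thesis unfolding U by (rule set_integral_Un[OF _ i1 i2]) auto
qed

theorem theorem3:
  fixes a b c d :: real and P N :: "real measure" and f :: "real \<Rightarrow> real"
  assumes "a < b"
    and "SP_measure a b P N"
    and "left_almost_convex a b P N f c d"
    and "barycenter a b P N \<ge> c"
    and "sint P N {a..d} (\<lambda>x. (f x - f c) * (d - c) - (f d - f c) * (x - c)) \<ge> 0"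
  shows "f (barycenter a b P N) \<le> sint P N {a..b} f / smass a b P N"
proof -
  note F = SP_facts[OF assms(2)]
  note SP = assms(2)
  have iPf: "set_integrable P {a..b} f" and iNf: "set_integrable N {a..b} f"
    and ac: "a < c" and cd: "c < d" and db: "d < b" and cvf: "convex_on {c..b} f"
    and hb: "\<forall>x\<in>{a..c}. f x \<ge> f c + (f d - f c) / (d - c) * (x - c)"
    using assms(3) unfolding left_almost_convex_def by auto
  define M where "M = smass a b P N"
  define m where "m = barycenter a b P N"
  have M0: "M > 0" using F(5) by (simp add: M_def)
  have cm: "c \<le> m" using assms(4) by (simp add: m_def)
  have cid: "continuous_on {a..b} (\<lambda>x::real. x)" by (intro continuous_intros)
  have iidP: "set_integrable P {a..b} (\<lambda>x::real. x)" by (rule cont_int[OF F(1) F(3) cid])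
  have iidN: "set_integrable N {a..b} (\<lambda>x::real. x)" by (rule cont_int[OF F(2) F(4) cid])
  have ccst: "continuous_on {a..b} (\<lambda>x::real. k::real)" for k by (intro continuous_intros)
  have icP: "set_integrable P {a..b} (\<lambda>x::real. k::real)" for k by (rule cont_int[OF F(1) F(3) ccst])
  have icN: "set_integrable N {a..b} (\<lambda>x::real. k::real)" for k by (rule cont_int[OF F(2) F(4) ccst])
  have sid: "sint P N {a..b} (\<lambda>x. x) = m * M"
    using M0 by (simp add: m_def M_def barycenter_def)
  have "m \<le> b"
  proof -
    have "sint P N {a..b} (\<lambda>x. b - x) \<ge> 0"
    proof (rule F(6))
      show "continuous_on {a..b} (\<lambda>x. b - x)" by (intro continuous_intros)
      have "convex_on {a..b} (\<lambda>x. b + (-1) * x)" by (rule affine_convex) simp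
      then show "convex_on {a..b} (\<lambda>x. b - x)" by simp
    qed auto
    moreover have "sint P N {a..b} (\<lambda>x. b - x) = b * M - m * M"
      using sint_diff[OF icP iidP icN iidN, of b] sid sint_const[OF SP, of b] by (simp add: M_def)
    ultimately have "m * M \<le> b * M" by simp
    then show ?thesis using M0 by simp
  qed
  have bary: "sint P N {a..b} (\<lambda>x. x - m) = 0"
    using sint_diff[OF iidP icP iidN icN, of m] sid sint_const[OF SP, of m] by (simp add: M_def)
  define sl where "sl = (f d - f c) / (d - c)"
  define h where "h = (\<lambda>x. f c + sl * (x - c))"
  have hd: "h d = f d" using cd by (simp add: h_def sl_def)
  define \<phi> where "\<phi> = (\<lambda>x. if x \<le> d then h x else f x)"
  have cvphi: "convex_on {a..b} \<phi>"
    unfolding \<phi>_def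
  proof (rule glue_convex[where s = sl])
    have "convex_on {a..d} (\<lambda>x. (f c - sl * c) + sl * x)" by (rule affine_convex) simp
    then show "convex_on {a..d} h" by (simp add: h_def algebra_simps)
    show "convex_on {d..b} f" by (rule convex_on_subset[OF cvf]) (use cd in auto)
    show "h d = f d" by (rule hd)
    fix x
    show "h d + sl * (x - d) \<le> h x" by (simp add: h_def algebra_simps)
    assume x: "x \<in> {d..b}"
    show "f d + sl * (x - d) \<le> f x"
    proof (cases "x = d")
      case False
      then have "d < x" using x by auto
      then have "(f d - f c) * (x - d) \<le> (f x - f d) * (d - c)"
        using three_chord[OF cvf, of c x d] x cd by auto
      moreover have "f d - f c = sl * (d - c)" using cd by (simp add: sl_def)
      ultimately have "(sl * (x - d)) * (d - c) \<le> (f x - f d) * (d - c)" by (simp add: algebra_simps)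
      then have "sl * (x - d) \<le> f x - f d" using cd by simp
      then show ?thesis by simp
    qed simp
  qed (use ac cd db in auto)
  have cf: "continuous_on {c<..<b} f"
    by (rule convex_on_continuous) (auto intro: convex_on_subset[OF cvf])
  have ctphi: "continuous_on {a..<b} \<phi>"
    unfolding \<phi>_def
  proof (rule continuous_on_cases_le)
    show "continuous_on {x \<in> {a..<b}. x \<le> d} h" unfolding h_def by (intro continuous_intros)
    show "continuous_on {x \<in> {a..<b}. d \<le> x} f"
      by (rule continuous_on_subset[OF cf]) (use cd in auto)
    show "continuous_on {a..<b} (\<lambda>x. x)" by (intro continuous_intros)
  qed (use hd in auto)
  have ch: "continuous_on {a..b} h" unfolding h_def by (intro continuous_intros)
  have ihP: "set_integrable P {a..b} h" by (rule cont_int[OF F(1) F(3) ch])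
  have ihN: "set_integrable N {a..b} h" by (rule cont_int[OF F(2) F(4) ch])
  have bdphi: "\<forall>x\<in>{a..b}. \<bar>\<phi> x\<bar> \<le> \<bar>\<bar>f x\<bar> + \<bar>h x\<bar>\<bar>" by (auto simp: \<phi>_def)
  have iGP: "set_integrable P {a..b} (\<lambda>x. \<bar>f x\<bar> + \<bar>h x\<bar>)"
    by (intro set_integral_add(1) set_integrable_abs iPf ihP)
  have iGN: "set_integrable N {a..b} (\<lambda>x. \<bar>f x\<bar> + \<bar>h x\<bar>)"
    by (intro set_integral_add(1) set_integrable_abs iNf ihN)
  have ipP: "set_integrable P {a..b} \<phi>"
    by (rule half_int[OF F(1) F(3) _ ctphi iGP bdphi]) (use assms(1) in auto)
  have ipN: "set_integrable N {a..b} \<phi>"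
    by (rule half_int[OF F(2) F(4) _ ctphi iGN bdphi]) (use assms(1) in auto)
  have J: "\<phi> m * M \<le> sint P N {a..b} \<phi>"
    unfolding M_def
    by (rule Jensen[OF SP assms(1) cvphi ctphi ipP ipN _ \<open>m \<le> b\<close> bary]) (use ac cm in auto)
  have fm: "f m \<le> \<phi> m"
  proof (cases "m \<le> d")
    case True
    have "f m \<le> (f d - f c) / (d - c) * (m - c) + f c"
      by (rule convex_onD_Icc'[OF convex_on_subset[OF cvf]]) (use True cm cd db in auto)
    then show ?thesis using True by (simp add: \<phi>_def h_def sl_def)
  qed (simp add: \<phi>_def)
  have sub: "{a..d} \<subseteq> {a..b}" using db by auto
  have ifdP: "set_integrable P {a..d} f" by (rule set_integrable_subset[OF iPf _ sub]) (simp add: F(3))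
  have ifdN: "set_integrable N {a..d} f" by (rule set_integrable_subset[OF iNf _ sub]) (simp add: F(4))
  have ihdP: "set_integrable P {a..d} h" by (rule set_integrable_subset[OF ihP _ sub]) (simp add: F(3))
  have ihdN: "set_integrable N {a..d} h" by (rule set_integrable_subset[OF ihN _ sub]) (simp add: F(4))
  have phiQ: "(LINT x:{a..b}|Q. \<phi> x) = (LINT x:{a..d}|Q. h x) + (LINT x:{d<..b}|Q. f x)"
    if Q: "sets Q = sets borel" and iq: "set_integrable Q {a..b} \<phi>" for Q
  proof -
    have "(LINT x:{a..b}|Q. \<phi> x) = (LINT x:{a..d}|Q. \<phi> x) + (LINT x:{d<..b}|Q. \<phi> x)"
      by (rule split_int[OF Q iq]) (use ac cd db in auto)
    moreover have "(LINT x:{a..d}|Q. \<phi> x) = (LINT x:{a..d}|Q. h x)"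
      by (rule set_lebesgue_integral_cong) (auto simp: Q \<phi>_def)
    moreover have "(LINT x:{d<..b}|Q. \<phi> x) = (LINT x:{d<..b}|Q. f x)"
      by (rule set_lebesgue_integral_cong) (auto simp: Q \<phi>_def)
    ultimately show ?thesis by simp
  qed
  have fQ: "(LINT x:{a..b}|Q. f x) = (LINT x:{a..d}|Q. f x) + (LINT x:{d<..b}|Q. f x)"
    if Q: "sets Q = sets borel" and iq: "set_integrable Q {a..b} f" for Q
    by (rule split_int[OF Q iq]) (use ac cd db in auto)
  have diff: "sint P N {a..b} f - sint P N {a..b} \<phi> = sint P N {a..d} (\<lambda>x. f x - h x)"
    using phiQ[OF F(3) ipP] phiQ[OF F(4) ipN] fQ[OF F(3) iPf] fQ[OF F(4) iNf]
      sint_diff[OF ifdP ihdP ifdN ihdN]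
    by (simp add: sint_def)
  have "sint P N {a..d} (\<lambda>x. (f x - f c) * (d - c) - (f d - f c) * (x - c))
        = sint P N {a..d} (\<lambda>x. (d - c) * (f x - h x))"
  proof -
    have fdc: "f d - f c = sl * (d - c)" using cd by (simp add: sl_def)
    have "(\<lambda>x. (f x - f c) * (d - c) - (f d - f c) * (x - c)) = (\<lambda>x. (d - c) * (f x - h x))"
    proof
      fix x
      have "(f x - f c) * (d - c) - (f d - f c) * (x - c) = (f x - f c) * (d - c) - (sl * (d - c)) * (x - c)"
        by (simp only: fdc)
      also have "\<dots> = (d - c) * (f x - h x)" by (simp add: h_def algebra_simps)
      finally show "(f x - f c) * (d - c) - (f d - f c) * (x - c) = (d - c) * (f x - h x)" .
    qed
    then show ?thesis by simp
  qed
  then have "(d - c) * sint P N {a..d} (\<lambda>x. f x - h x) \<ge> 0"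
    using assms(5) by (simp add: sint_cmul)
  then have "sint P N {a..d} (\<lambda>x. f x - h x) \<ge> 0" using cd by (simp add: zero_le_mult_iff)
  then have "sint P N {a..b} \<phi> \<le> sint P N {a..b} f" using diff by simp
  then have "\<phi> m * M \<le> sint P N {a..b} f" using J by simp
  then have "\<phi> m \<le> sint P N {a..b} f / M" using M0 by (simp add: le_divide_eq)
  then show ?thesis using fm by (simp add: m_def M_def)
qed


end
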